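(* Let $G$ and $N$ be finite groups of the same order, let $\mathfrak{f}:G\to\mathrm{Aut}(N)$ be a homomorphism and let $\mathfrak{g}:G\to N$ be a bijective map such that $\mathfrak{g}(\sigma\tau)=\mathfrak{g}(\sigma)\cdot\mathfrak{f}(\sigma)(\mathfrak{g}(\tau))$ for all $\sigma,\tau\in G$. Let $\pi:\mathrm{Aut}(N)\to\mathrm{Out}(N)=\mathrm{Aut}(N)/\mathrm{Inn}(N)$ be the natural quotient map. If $G$ is insolvable and $N$ is solvable, then $(\pi\circ\mathfrak{f})(G)$ is an insolvable subgroup of $\mathrm{Out}(N)$.
   Context: $\mathrm{Inn}(N)$ and $\mathrm{Out}(N)$ denote the inner and outer automorphism groups of $N$. *)

theory Defs
  imports "HOL-Algebra.Algebra"
begin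

definition Inn :: "('a, 'b) monoid_scheme \<Rightarrow> ('a \<Rightarrow> 'a) set" where
  "Inn N = (\<lambda>n. \<lambda>x \<in> carrier N. n \<otimes>\<^bsub>N\<^esub> x \<otimes>\<^bsub>N\<^esub> inv\<^bsub>N\<^esub> n) ` carrier N"

definition Out :: "('a, 'b) monoid_scheme \<Rightarrow> ('a \<Rightarrow> 'a) set monoid" where
  "Out N = AutoGroup N Mod Inn N"

definition out_proj :: "('a, 'b) monoid_scheme \<Rightarrow> ('a \<Rightarrow> 'a) \<Rightarrow> ('a \<Rightarrow> 'a) set" where
  "out_proj N a = Inn N #>\<^bsub>AutoGroup N\<^esub> a"

end

theory Submission
  imports Defs
begin

definition conj_map :: "('a, 'b) monoid_scheme \<Rightarrow> 'a \<Rightarrow> ('a \<Rightarrow> 'a)" where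
  "conj_map N n = (\<lambda>x \<in> carrier N. n \<otimes>\<^bsub>N\<^esub> x \<otimes>\<^bsub>N\<^esub> inv\<^bsub>N\<^esub> n)"

lemma Inn_conj: "Inn N = conj_map N ` carrier N"
  unfolding Inn_def conj_map_def by simp

lemma (in group) inv_cancel_aux [simp]:
  "n \<in> carrier G \<Longrightarrow> x \<in> carrier G \<Longrightarrow> inv n \<otimes> (n \<otimes> x) = x"
  by (simp add: m_assoc[symmetric])

lemma (in group) inv_cancel_aux2 [simp]:
  "n \<in> carrier G \<Longrightarrow> x \<in> carrier G \<Longrightarrow> n \<otimes> (inv n \<otimes> x) = x"
  by (simp add: m_assoc[symmetric])

lemma (in group) conj_mult_aux:
  assumes "n \<in> carrier G" "x \<in> carrier G" "y \<in> carrier G"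
  shows "n \<otimes> (x \<otimes> y) \<otimes> inv n = n \<otimes> x \<otimes> inv n \<otimes> (n \<otimes> y \<otimes> inv n)"
proof -
  have "n \<otimes> x \<otimes> inv n \<otimes> (n \<otimes> y \<otimes> inv n) = n \<otimes> x \<otimes> (inv n \<otimes> n) \<otimes> y \<otimes> inv n"
    using assms by (simp add: m_assoc)
  also have "\<dots> = n \<otimes> (x \<otimes> y) \<otimes> inv n" using assms by (simp add: m_assoc)
  finally show ?thesis by simp
qed

lemma (in group) conj_map_auto:
  assumes n: "n \<in> carrier G" shows "conj_map G n \<in> auto G"
proof -
  have h: "conj_map G n \<in> hom G G"
    unfolding hom_def conj_map_def using n by (auto simp: conj_mult_aux)
  have b: "bij_betw (conj_map G n) (carrier G) (carrier G)"
  proof (rule bij_betwI[where g="conj_map G (inv n)"])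
    show "conj_map G n \<in> carrier G \<rightarrow> carrier G" using n by (auto simp: conj_map_def)
    show "conj_map G (inv n) \<in> carrier G \<rightarrow> carrier G" using n by (auto simp: conj_map_def)
    fix x assume x: "x \<in> carrier G"
    have "inv n \<otimes> (n \<otimes> x \<otimes> inv n) \<otimes> inv (inv n) = (inv n \<otimes> n) \<otimes> x \<otimes> (inv n \<otimes> n)"
      using n x by (simp add: m_assoc)
    then show "conj_map G (inv n) (conj_map G n x) = x" using n x by (simp add: conj_map_def)
    have "n \<otimes> (inv n \<otimes> x \<otimes> inv (inv n)) \<otimes> inv n = (n \<otimes> inv n) \<otimes> x \<otimes> (n \<otimes> inv n)"
      using n x by (simp add: m_assoc)
    then show "conj_map G n (conj_map G (inv n) x) = x" using n x by (simp add: conj_map_def)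
  qed
  show ?thesis unfolding auto_def Bij_def using h b by (auto simp: conj_map_def)
qed

lemma (in group) AutoGroup_mult:
  "a \<in> auto G \<Longrightarrow> b \<in> auto G \<Longrightarrow> a \<otimes>\<^bsub>AutoGroup G\<^esub> b = compose (carrier G) a b"
  by (simp add: AutoGroup_def BijGroup_def auto_def)

lemma (in group) conj_map_hom: "conj_map G \<in> hom G (AutoGroup G)"
proof -
  { fix m n assume m: "m \<in> carrier G" and n: "n \<in> carrier G"
    have "conj_map G (m \<otimes> n) = compose (carrier G) (conj_map G m) (conj_map G n)"
      using m n by (auto simp: conj_map_def compose_def m_assoc inv_mult_group fun_eq_iff)
    then have "conj_map G (m \<otimes> n) = conj_map G m \<otimes>\<^bsub>AutoGroup G\<^esub> conj_map G n"
      using m n by (simp add: AutoGroup_mult conj_map_auto) }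
  moreover have "carrier (AutoGroup G) = auto G" by (simp add: AutoGroup_def)
  ultimately show ?thesis unfolding hom_def
    by (auto simp: conj_map_auto)
qed

lemma (in group) Inn_normal: "Inn G \<lhd> AutoGroup G"
proof -
  interpret A: group "AutoGroup G" by (rule AutoGroup)
  interpret c: group_hom G "AutoGroup G" "conj_map G"
    by (simp add: group_hom_def group_hom_axioms_def conj_map_hom AutoGroup is_group)
  have sub: "subgroup (Inn G) (AutoGroup G)" unfolding Inn_conj by (rule c.img_is_subgroup)
  show ?thesis unfolding A.normal_inv_iff
  proof (intro conjI sub ballI)
    fix a h assume a: "a \<in> carrier (AutoGroup G)" and h: "h \<in> Inn G"
    then obtain n where n: "n \<in> carrier G" and hn: "h = conj_map G n" unfolding Inn_conj by auto
    have aA: "a \<in> auto G" using a by (simp add: AutoGroup_def)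
    then have ah: "a \<in> hom G G" and aB: "a \<in> Bij (carrier G)" by (auto simp: auto_def)
    interpret ag: group_hom G G a by (simp add: group_hom_def group_hom_axioms_def ah is_group)
    have an: "a n \<in> carrier G" using n by simp
    have "compose (carrier G) a (conj_map G n) = compose (carrier G) (conj_map G (a n)) a"
      using n an aB
      by (auto simp: compose_def conj_map_def fun_eq_iff Bij_def bij_betw_def)
    then have eq: "a \<otimes>\<^bsub>AutoGroup G\<^esub> h = conj_map G (a n) \<otimes>\<^bsub>AutoGroup G\<^esub> a"
      unfolding hn using n an aA by (simp add: AutoGroup_mult conj_map_auto)
    have hA: "h \<in> carrier (AutoGroup G)" using n hn conj_map_auto by (simp add: AutoGroup_def)
    have cA: "conj_map G (a n) \<in> carrier (AutoGroup G)" using an conj_map_auto by (simp add: AutoGroup_def)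
    have "a \<otimes>\<^bsub>AutoGroup G\<^esub> h \<otimes>\<^bsub>AutoGroup G\<^esub> inv\<^bsub>AutoGroup G\<^esub> a = conj_map G (a n)"
      using a hA cA by (simp add: eq A.m_assoc)
    thus "a \<otimes>\<^bsub>AutoGroup G\<^esub> h \<otimes>\<^bsub>AutoGroup G\<^esub> inv\<^bsub>AutoGroup G\<^esub> a \<in> Inn G"
      using an unfolding Inn_conj by simp
  qed
qed


theorem proposition3p2:
  fixes G :: "('g, 'c) monoid_scheme" and N :: "('n, 'd) monoid_scheme"
    and f :: "'g \<Rightarrow> ('n \<Rightarrow> 'n)" and g :: "'g \<Rightarrow> 'n"
  assumes "group G" and "group N"
    and "finite (carrier G)" and "finite (carrier N)"
    and "card (carrier G) = card (carrier N)"
    and "f \<in> hom G (AutoGroup N)"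
    and "bij_betw g (carrier G) (carrier N)"
    and "\<And>\<sigma> \<tau>. \<sigma> \<in> carrier G \<Longrightarrow> \<tau> \<in> carrier G \<Longrightarrow>
           g (\<sigma> \<otimes>\<^bsub>G\<^esub> \<tau>) = g \<sigma> \<otimes>\<^bsub>N\<^esub> f \<sigma> (g \<tau>)"
    and "\<not> solvable G" and "solvable N"
  shows "subgroup ((out_proj N \<circ> f) ` carrier G) (Out N)
       \<and> \<not> solvable ((Out N)\<lparr>carrier := (out_proj N \<circ> f) ` carrier G\<rparr>)"
proof -
  interpret G: group G by fact
  interpret N: group N by fact
  interpret A: group "AutoGroup N" by (rule N.AutoGroup)
  interpret I: normal "Inn N" "AutoGroup N" by (rule N.Inn_normal)
  interpret O: group "Out N" unfolding Out_def by (rule I.factorgroup_is_group)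
  interpret f: group_hom G "AutoGroup N" f
    using assms(6) by (simp add: group_hom_def group_hom_axioms_def G.is_group A.is_group)
  interpret c: group_hom N "AutoGroup N" "conj_map N"
    by (simp add: group_hom_def group_hom_axioms_def N.conj_map_hom A.is_group N.is_group)
  define \<phi> where "\<phi> = out_proj N \<circ> f"
  have ph: "out_proj N \<in> hom (AutoGroup N) (Out N)"
    unfolding Out_def out_proj_def[abs_def] by (rule I.r_coset_hom_Mod)
  have phihom: "\<phi> \<in> hom G (Out N)" unfolding \<phi>_def by (rule hom_compose[OF assms(6) ph])
  interpret phi: group_hom G "Out N" \<phi>
    using phihom by (simp add: group_hom_def group_hom_axioms_def G.is_group O.is_group)
  have sub: "subgroup (\<phi> ` carrier G) (Out N)" by (rule phi.img_is_subgroup)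
  define Q where "Q = (Out N)\<lparr>carrier := \<phi> ` carrier G\<rparr>"
  have Qgrp: "group Q" unfolding Q_def using subgroup.subgroup_is_group[OF sub O.is_group] .
  have phiQ: "group_hom G Q \<phi>"
    using phihom Qgrp unfolding Q_def
    by (auto simp: group_hom_def group_hom_axioms_def G.is_group hom_def)
  define K where "K = kernel G (Out N) \<phi>"
  have Ksub: "subgroup K G" unfolding K_def by (rule phi.subgroup_kernel)
  have Kf: "f ` K \<subseteq> Inn N"
  proof
    fix a assume "a \<in> f ` K"
    then obtain \<sigma> where s: "\<sigma> \<in> carrier G" and eq: "out_proj N (f \<sigma>) = Inn N" and a: "a = f \<sigma>"
      unfolding K_def kernel_def \<phi>_def Out_def by auto
    have "f \<sigma> \<in> carrier (AutoGroup N)" using s by simp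
    then have "f \<sigma> \<in> Inn N #>\<^bsub>AutoGroup N\<^esub> f \<sigma>" by (rule A.rcos_self[OF _ I.subgroup_axioms])
    then show "a \<in> Inn N" using eq a unfolding out_proj_def by simp
  qed
  define K0 where "K0 = G\<lparr>carrier := kernel G (AutoGroup N) f\<rparr>"
  have K0grp: "group K0" unfolding K0_def
    by (rule subgroup.subgroup_is_group[OF f.subgroup_kernel G.is_group])
  have K0G: "group_hom K0 G id"
    using K0grp unfolding K0_def
    by (auto simp: group_hom_def group_hom_axioms_def G.is_group hom_def kernel_def)
  have K0N: "group_hom K0 N g"
  proof -
    have "g \<in> hom K0 N"
    proof (rule homI)
      fix x assume "x \<in> carrier K0"
      then show "g x \<in> carrier N" using assms(7) unfolding K0_def kernel_def bij_betw_def by auto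
    next
      fix x y assume x: "x \<in> carrier K0" and y: "y \<in> carrier K0"
      then have xs: "x \<in> carrier G" and fx: "f x = (\<lambda>z\<in>carrier N. z)" and ys: "y \<in> carrier G"
        unfolding K0_def kernel_def by (auto simp: AutoGroup_def BijGroup_def)
      have "g y \<in> carrier N" using ys assms(7) unfolding bij_betw_def by auto
      then show "g (x \<otimes>\<^bsub>K0\<^esub> y) = g x \<otimes>\<^bsub>N\<^esub> g y"
        using assms(8)[OF xs ys] fx unfolding K0_def by simp
    qed
    then show ?thesis using K0grp by (simp add: group_hom_def group_hom_axioms_def N.is_group)
  qed
  have K0sol: "solvable K0"
  proof (rule group_hom.inj_hom_imp_solvable[OF K0N _ assms(10)])
    show "inj_on g (carrier K0)" using assms(7) unfolding K0_def bij_betw_def kernel_def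
      by (auto intro: inj_on_subset)
  qed
  have Isol: "solvable_seq (AutoGroup N) (Inn N)"
    using c.solvable_imp_solvable_img[of "carrier N"] assms(10) unfolding solvable_def Inn_conj by simp
  have fKsub: "subgroup (f ` K) (AutoGroup N)" by (rule f.subgroup_img_is_subgroup[OF Ksub])
  have fKsol: "solvable_seq (AutoGroup N) (f ` K)"
  proof -
    obtain n where n: "(derived (AutoGroup N) ^^ n) (Inn N) = { \<one>\<^bsub>AutoGroup N\<^esub> }"
      using A.solvable_imp_trivial_derived_seq[OF Isol] by blast
    show ?thesis
    proof (rule A.trivial_derived_seq_imp_solvable[OF fKsub, of n])
      show "(derived (AutoGroup N) ^^ n) (f ` K) = { \<one>\<^bsub>AutoGroup N\<^esub> }"
        using subgroup.one_closed[OF A.exp_of_derived_is_subgroup[OF fKsub], of n]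
              A.mono_exp_of_derived[OF Kf, of n] n
        by auto
    qed
  qed
  have Ksol: "solvable_seq G K"
  proof (rule solvable_seq_condition[OF K0G f.group_hom_axioms _ _ Ksub _ fKsol])
    show "id ` kernel G (AutoGroup N) f \<subseteq> K"
    proof
      fix x assume "x \<in> id ` kernel G (AutoGroup N) f"
      then have x: "x \<in> carrier G" "f x = \<one>\<^bsub>AutoGroup N\<^esub>" unfolding kernel_def by auto
      have "out_proj N \<one>\<^bsub>AutoGroup N\<^esub> = \<one>\<^bsub>Out N\<^esub>"
        using ph by (simp add: group_hom.hom_one group_hom_def group_hom_axioms_def A.is_group O.is_group)
      then show "x \<in> K" using x unfolding K_def kernel_def \<phi>_def by simp
    qed
    show "kernel G (AutoGroup N) f \<subseteq> id ` kernel G (AutoGroup N) f" by simp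
    show "solvable_seq K0 (kernel G (AutoGroup N) f)" using K0sol unfolding solvable_def K0_def by simp
  qed
  have "\<not> solvable Q"
  proof
    assume Qs: "solvable Q"
    have "solvable_seq G (carrier G)"
    proof (rule solvable_seq_condition[OF _ phiQ _ _ G.subgroup_self Ksol])
      show "group_hom G G id" by (simp add: group_hom_def group_hom_axioms_def G.is_group hom_def)
      show "id ` K \<subseteq> carrier G" using Ksub subgroup.subset by auto
      show "kernel G Q \<phi> \<subseteq> id ` K" unfolding K_def kernel_def Q_def by simp
      show "solvable_seq Q (\<phi> ` carrier G)" using Qs unfolding solvable_def Q_def by simp
    qed
    then show False using assms(9) unfolding solvable_def by simp
  qed
  then show ?thesis using sub unfolding Q_def \<phi>_def by simp
qed

end
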